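(* Let $t\in T_2$, write $xy$ for $t(x,y)$, let $\mathcal{T}_t$ be the variety defined by $t(x,y)=x$, and let $A=X\mathcal{T}_t^{\,p}$ be the free $\mathcal{T}_t^{\,p}$-algebra over a set $X$, written as the semilattice sum $A=\bigsqcup_{s\in S}A_s$ of its semilattice replica classes $A_s$ (each in $\mathcal{T}_t$) over $S=A/\varrho\cong X\mathcal{S}$. Let $\theta$ be a congruence of $A$, and suppose $(a'_r,b'_s)\in\theta$ for some $r,s\in S$, $a'_r\in A_r$, $b'_s\in A_s$. Then for every $a_r\in A_r$ and every $b_s\in A_s$, $(b_s,\,b_sa_r)\in\theta$.
   Context: $\Omega$-algebras are of a plural similarity type (no nullary operation symbols, at least one operation symbol of arity $\ge2$). $T_n$ is the set of $\Omega$-terms in $x_1,\dots,x_n$ in which all $n$ variables occur. An identity is regular if the same variables occur on both sides. $\mathcal{S}$ is the variety of $\Omega$-algebras satisfying all regular identities; the semilattice replica congruence $\varrho$ of $A$ is the smallest congruence with $A/\varrho\in\mathcal{S}$. Prolongation: for an identity $\sigma$ of the form $u(y_1,\dots,y_n)=v(y_1,\dots,y_n)$ and $m\ge1$, $\sigma^p_m$ is the set of identities $u(r_1,\dots,r_n)=v(r_1,\dots,r_n)$ obtained by substituting $r_i(x_1,\dots,x_m)$ for $y_i$, with $r_i$ ranging over $T_m$; $\sigma^p=\bigcup_m\sigma^p_m$; $\Sigma^p=\bigcup_{\sigma\in\Sigma}\sigma^p$. $\mathcal{V}^p$ is the variety defined by $\mathrm{Id}(\mathcal{V})^p$, where $\mathrm{Id}(\mathcal{V})$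 is the set of all identities of $\mathcal{V}$. (It is known that the $\varrho$-classes of $X\mathcal{T}_t^{\,p}$ lie in $\mathcal{T}_t$ and $A/\varrho$ is the free semilattice on $X$.) *)

theory Defs
  imports Main
begin

datatype ('f, 'v) trm = Var 'v | App 'f "('f, 'v) trm list"

fun wf :: "('f \<Rightarrow> nat) \<Rightarrow> ('f, 'v) trm \<Rightarrow> bool" where
  "wf ar (Var v) = True"
| "wf ar (App f ts) = (length ts = ar f \<and> (\<forall>u\<in>set ts. wf ar u))"

fun vars :: "('f, 'v) trm \<Rightarrow> 'v set" where
  "vars (Var v) = {v}"
| "vars (App f ts) = \<Union> (vars ` set ts)"

fun subst :: "('v \<Rightarrow> ('f, 'w) trm) \<Rightarrow> ('f, 'v) trm \<Rightarrow> ('f, 'w) trm" where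
  "subst \<sigma> (Var v) = \<sigma> v"
| "subst \<sigma> (App f ts) = App f (map (subst \<sigma>) ts)"

fun eval :: "('f \<Rightarrow> 'a list \<Rightarrow> 'a) \<Rightarrow> ('v \<Rightarrow> 'a) \<Rightarrow> ('f, 'v) trm \<Rightarrow> 'a" where
  "eval ops \<rho> (Var v) = \<rho> v"
| "eval ops \<rho> (App f ts) = ops f (map (eval ops \<rho>) ts)"

definition plural :: "('f \<Rightarrow> nat) \<Rightarrow> bool" where
  "plural ar \<longleftrightarrow> (\<forall>f. 0 < ar f) \<and> (\<exists>f. 2 \<le> ar f)"

text \<open>Variables are natural numbers; x_i is Var i.  T_m: terms in x_1..x_m in which all occur.\<close>
definition Tm :: "('f \<Rightarrow> nat) \<Rightarrow> nat \<Rightarrow> ('f, nat) trm set" where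
  "Tm ar m = {r. wf ar r \<and> vars r = {1..m}}"

inductive eqc :: "('f \<Rightarrow> nat) \<Rightarrow> (('f, nat) trm \<times> ('f, nat) trm) set
                   \<Rightarrow> ('f, 'v) trm \<Rightarrow> ('f, 'v) trm \<Rightarrow> bool"
  for ar :: "'f \<Rightarrow> nat" and E :: "(('f, nat) trm \<times> ('f, nat) trm) set" where
  ax: "(u, v) \<in> E \<Longrightarrow> (\<forall>i. wf ar (\<sigma> i)) \<Longrightarrow> eqc ar E (subst \<sigma> u) (subst \<sigma> v)"
| refl: "wf ar u \<Longrightarrow> eqc ar E u u"
| sym: "eqc ar E u v \<Longrightarrow> eqc ar E v u"
| trans: "eqc ar E u v \<Longrightarrow> eqc ar E v w \<Longrightarrow> eqc ar E u w"
| cong: "length ts = ar f \<Longrightarrow> length ss = ar f \<Longrightarrow> list_all2 (eqc ar E) ts ss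
          \<Longrightarrow> eqc ar E (App f ts) (App f ss)"

text \<open>Id(V) for the variety V defined by E: all (well-formed) identities derivable from E
  (by Birkhoff's completeness theorem these are exactly the identities holding in V).\<close>
definition Id_of :: "('f \<Rightarrow> nat) \<Rightarrow> (('f, nat) trm \<times> ('f, nat) trm) set
                      \<Rightarrow> (('f, nat) trm \<times> ('f, nat) trm) set" where
  "Id_of ar E = {(u, v). wf ar u \<and> wf ar v \<and> eqc ar E u v}"

definition prolong :: "('f \<Rightarrow> nat) \<Rightarrow> (('f, nat) trm \<times> ('f, nat) trm) set
                        \<Rightarrow> (('f, nat) trm \<times> ('f, nat) trm) set" where
  "prolong ar \<Sigma> = {(subst \<sigma> u, subst \<sigma> v) | u v \<sigma> m.
       (u, v) \<in> \<Sigma> \<and> 1 \<le> m \<and> (\<forall>i. \<sigma> i \<in> Tm ar m)}"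

text \<open>The identity t(x,y) = x defining T_t, with x = x_1, y = x_2.\<close>
definition Tt_ids :: "('f, nat) trm \<Rightarrow> (('f, nat) trm \<times> ('f, nat) trm) set" where
  "Tt_ids t = {(t, Var 1)}"

definition terms_over :: "('f \<Rightarrow> nat) \<Rightarrow> 'x set \<Rightarrow> ('f, 'x) trm set" where
  "terms_over ar X = {u. wf ar u \<and> vars u \<subseteq> X}"

definition free_rel :: "('f \<Rightarrow> nat) \<Rightarrow> (('f, nat) trm \<times> ('f, nat) trm) set \<Rightarrow> 'x set
                         \<Rightarrow> ('f, 'x) trm rel" where
  "free_rel ar \<Sigma> X = {(u, v). u \<in> terms_over ar X \<and> v \<in> terms_over ar X \<and> eqc ar \<Sigma> u v}"

definition free_carrier :: "('f \<Rightarrow> nat) \<Rightarrow> (('f, nat) trm \<times> ('f, nat) trm) set \<Rightarrow> 'x set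
                             \<Rightarrow> ('f, 'x) trm set set" where
  "free_carrier ar \<Sigma> X = terms_over ar X // free_rel ar \<Sigma> X"

definition free_op :: "('f \<Rightarrow> nat) \<Rightarrow> (('f, nat) trm \<times> ('f, nat) trm) set \<Rightarrow> 'x set
                        \<Rightarrow> 'f \<Rightarrow> ('f, 'x) trm set list \<Rightarrow> ('f, 'x) trm set" where
  "free_op ar \<Sigma> X f cs = free_rel ar \<Sigma> X `` {App f (map (\<lambda>c. SOME u. u \<in> c) cs)}"

definition is_cong :: "('f \<Rightarrow> nat) \<Rightarrow> 'a set \<Rightarrow> ('f \<Rightarrow> 'a list \<Rightarrow> 'a) \<Rightarrow> 'a rel \<Rightarrow> bool" where
  "is_cong ar C ops \<theta> \<longleftrightarrow> equiv C \<theta> \<and>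
     (\<forall>f xs ys. length xs = ar f \<and> length ys = ar f \<and> set xs \<subseteq> C \<and> set ys \<subseteq> C \<and>
        list_all2 (\<lambda>x y. (x, y) \<in> \<theta>) xs ys \<longrightarrow> (ops f xs, ops f ys) \<in> \<theta>)"

text \<open>A congruence alpha such that the quotient satisfies every regular identity
  (i.e. the quotient lies in the variety S).\<close>
definition S_cong :: "('f \<Rightarrow> nat) \<Rightarrow> 'a set \<Rightarrow> ('f \<Rightarrow> 'a list \<Rightarrow> 'a) \<Rightarrow> 'a rel \<Rightarrow> bool" where
  "S_cong ar C ops \<alpha> \<longleftrightarrow> is_cong ar C ops \<alpha> \<and>
     (\<forall>(u :: ('f, nat) trm) v. wf ar u \<and> wf ar v \<and> vars u = vars v \<longrightarrow>
        (\<forall>\<rho>. (\<forall>i. \<rho> i \<in> C) \<longrightarrow> (eval ops \<rho> u, eval ops \<rho> v) \<in> \<alpha>))"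

definition replica :: "('f \<Rightarrow> nat) \<Rightarrow> 'a set \<Rightarrow> ('f \<Rightarrow> 'a list \<Rightarrow> 'a) \<Rightarrow> 'a rel" where
  "replica ar C ops = {(a, b). a \<in> C \<and> b \<in> C \<and> (\<forall>\<alpha>. S_cong ar C ops \<alpha> \<longrightarrow> (a, b) \<in> \<alpha>)}"

definition binop :: "('f, nat) trm \<Rightarrow> ('f \<Rightarrow> 'a list \<Rightarrow> 'a) \<Rightarrow> 'a \<Rightarrow> 'a \<Rightarrow> 'a" where
  "binop t ops x y = eval ops (\<lambda>i. if i = 1 then x else y) t"

end

theory Submission
  imports Defs
begin

lemma subst_subst: "subst \<tau> (subst \<sigma> u) = subst (\<lambda>i. subst \<tau> (\<sigma> i)) u"
  by (induction u) auto

lemma subst_Var: "subst Var u = u"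
  by (induction u) (auto simp: map_idI)

lemma subst_cong': "(\<forall>x\<in>vars u. \<sigma> x = \<sigma>' x) \<Longrightarrow> subst \<sigma> u = subst \<sigma>' u"
  by (induction u) auto

lemma vars_subst: "vars (subst \<sigma> u) = (\<Union>x\<in>vars u. vars (\<sigma> x))"
  by (induction u) auto

lemma wf_subst: "wf ar u \<Longrightarrow> (\<forall>x. wf ar (\<sigma> x)) \<Longrightarrow> wf ar (subst \<sigma> u)"
  by (induction u) auto

lemma finite_vars: "finite (vars u)"
  by (induction u) auto

lemma vars_ne: "plural ar \<Longrightarrow> wf ar u \<Longrightarrow> vars u \<noteq> {}"
proof (induction u)
  case (Var x)
  then show ?case by simp
next
  case (App f ts)
  then have "ts \<noteq> []" unfolding plural_def by (metis list.size(3) wf.simps(2) less_irrefl)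
  then obtain u where "u \<in> set ts" by (cases ts) auto
  with App show ?case by auto
qed

lemma list_all2_map_eq: "list_all2 (\<lambda>a b. f a = f b) xs ys \<Longrightarrow> map f xs = map f ys"
  by (induction rule: list_all2_induct) auto

lemma eqc_vars:
  assumes pl: "plural ar"
  shows "eqc ar (prolong ar (Id_of ar E)) u v \<Longrightarrow> vars u = vars v"
proof (induction rule: eqc.induct)
  case (ax u0 v0 \<tau>)
  then obtain p q \<sigma> m where uv: "u0 = subst \<sigma> p" "v0 = subst \<sigma> q" "(p, q) \<in> Id_of ar E"
    "1 \<le> m" "\<forall>i. \<sigma> i \<in> Tm ar m"
    unfolding prolong_def by blast
  have "vars p \<noteq> {}" "vars q \<noteq> {}" using uv(3) vars_ne[OF pl] unfolding Id_of_def by auto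
  moreover have "\<forall>i. vars (\<sigma> i) = {1..m}" using uv(5) unfolding Tm_def by auto
  ultimately have "vars u0 = {1..m}" "vars v0 = {1..m}" using uv(1,2) by (auto simp: vars_subst)
  then show ?case by (simp add: vars_subst)
next
  case (cong ts f ss)
  have "list_all2 (\<lambda>a b. vars a = vars b) ts ss"
    using cong(3) by (rule list_all2_mono) auto
  then have "map vars ts = map vars ss" by (rule list_all2_map_eq)
  then have "vars ` set ts = vars ` set ss" by (metis list.set_map)
  then show ?case by simp
qed auto


locale fa =
  fixes ar :: "'f \<Rightarrow> nat" and \<Sigma> :: "(('f, nat) trm \<times> ('f, nat) trm) set" and X :: "'x set"
  assumes evars: "\<And>u v :: ('f,'x) trm. eqc ar \<Sigma> u v \<Longrightarrow> vars u = vars v"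
begin

abbreviation "R \<equiv> free_rel ar \<Sigma> X"
abbreviation "cls u \<equiv> R `` {u}"
abbreviation "AA \<equiv> free_carrier ar \<Sigma> X"
abbreviation "oo \<equiv> free_op ar \<Sigma> X"
definition cv :: "('f,'x) trm set \<Rightarrow> 'x set" where "cv c = vars (SOME u. u \<in> c)"

lemma equiv_R: "equiv (terms_over ar X) R"
proof (rule equivI)
  show "refl_on (terms_over ar X) R"
    unfolding refl_on_def free_rel_def terms_over_def by (auto intro: eqc.refl)
  show "sym R" unfolding sym_def free_rel_def by (auto intro: eqc.sym)
  show "trans R" unfolding trans_def free_rel_def by (blast intro: eqc.trans)
  show "R \<subseteq> terms_over ar X \<times> terms_over ar X" unfolding free_rel_def by auto
qed

lemma cls_in: "u \<in> terms_over ar X \<Longrightarrow> cls u \<in> AA"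
  unfolding free_carrier_def by (rule quotientI)

lemma in_cls: "u \<in> terms_over ar X \<Longrightarrow> u \<in> cls u"
  by (rule equiv_class_self[OF equiv_R])

lemma cls_eq: "u \<in> terms_over ar X \<Longrightarrow> v \<in> terms_over ar X \<Longrightarrow> eqc ar \<Sigma> u v \<Longrightarrow> cls u = cls v"
  using equiv_R by (intro equiv_class_eq) (auto simp: free_rel_def)

lemma A_cls: assumes "c \<in> AA"
  shows "(SOME u. u \<in> c) \<in> terms_over ar X" "c = cls (SOME u. u \<in> c)"
proof -
  obtain x where x: "x \<in> terms_over ar X" "c = cls x"
    using assms unfolding free_carrier_def by (auto elim: quotientE)
  then have "x \<in> c" using in_cls by simp
  then have "(SOME u. u \<in> c) \<in> c" by (rule someI)
  then have xs: "(x, SOME u. u \<in> c) \<in> R" using x by simp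
  then show "(SOME u. u \<in> c) \<in> terms_over ar X" unfolding free_rel_def by simp
  show "c = cls (SOME u. u \<in> c)" using x xs equiv_R by (simp add: equiv_class_eq)
qed

lemma app_terms: "length us = ar f \<Longrightarrow> set us \<subseteq> terms_over ar X \<Longrightarrow> App f us \<in> terms_over ar X"
  unfolding terms_over_def by auto

lemma ops_cls: assumes "length us = ar f" "set us \<subseteq> terms_over ar X"
  shows "oo f (map (\<lambda>u. cls u) us) = cls (App f us)"
proof -
  let ?vs = "map (\<lambda>c. SOME u. u \<in> c) (map (\<lambda>u. cls u) us)"
  have el: "\<forall>u\<in>set us. (SOME w. w \<in> cls u) \<in> cls u"
  proof
    fix u assume "u \<in> set us"
    then have "u \<in> cls u" using assms(2) in_cls by auto
    then show "(SOME w. w \<in> cls u) \<in> cls u" by (rule someI)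
  qed
  have "list_all2 (eqc ar \<Sigma>) ?vs us"
    unfolding list_all2_conv_all_nth
  proof (intro conjI allI impI)
    fix i assume "i < length ?vs"
    then have i: "i < length us" by simp
    then have "us ! i \<in> set us" by simp
    define v where "v = (SOME w. w \<in> cls (us ! i))"
    have "v \<in> cls (us ! i)" using el \<open>us ! i \<in> set us\<close> unfolding v_def by blast
    then have "(us ! i, v) \<in> R" by (simp only: Image_singleton_iff)
    then have "eqc ar \<Sigma> (us ! i) v" by (simp add: free_rel_def)
    moreover have "?vs ! i = v" using i unfolding v_def by simp
    ultimately show "eqc ar \<Sigma> (?vs ! i) (us ! i)" by (simp add: eqc.sym)
  qed simp
  then have "eqc ar \<Sigma> (App f ?vs) (App f us)" using assms(1) by (intro eqc.cong) auto
  moreover have "set ?vs \<subseteq> terms_over ar X"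
    using el unfolding free_rel_def by auto
  ultimately have "cls (App f ?vs) = cls (App f us)"
    using assms by (intro cls_eq app_terms) auto
  then show ?thesis unfolding free_op_def by simp
qed

lemma ops_cls': assumes "length cs = ar f" "set cs \<subseteq> AA"
  shows "oo f cs = cls (App f (map (\<lambda>c. SOME u. u \<in> c) cs))"
  unfolding free_op_def ..

lemma eval_cls: "wf ar p \<Longrightarrow> (\<forall>i. \<sigma> i \<in> terms_over ar X) \<Longrightarrow>
   eval oo (\<lambda>i. cls (\<sigma> i)) p = cls (subst \<sigma> p)"
proof (induction p)
  case (Var x)
  then show ?case by simp
next
  case (App f ts)
  have st: "set (map (subst \<sigma>) ts) \<subseteq> terms_over ar X"
    using App.prems by (auto simp: terms_over_def vars_subst intro!: wf_subst) blast
  have "map (eval oo (\<lambda>i. cls (\<sigma> i))) ts = map (\<lambda>u. cls u) (map (subst \<sigma>) ts)"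
    using App by auto
  moreover have "oo f (map (\<lambda>u. cls u) (map (subst \<sigma>) ts)) = cls (App f (map (subst \<sigma>) ts))"
    using ops_cls[OF _ st] App.prems by simp
  ultimately show ?case by (simp only: eval.simps subst.simps)
qed

lemma eval_A: assumes "wf ar p" "\<forall>i. e i \<in> AA" shows "eval oo e p \<in> AA"
proof -
  define \<sigma> where "\<sigma> i = (SOME u. u \<in> e i)" for i
  have 1: "e = (\<lambda>i. cls (\<sigma> i))" unfolding \<sigma>_def using A_cls assms(2) by auto
  have 2: "\<forall>i. \<sigma> i \<in> terms_over ar X" unfolding \<sigma>_def using A_cls assms(2) by auto
  have 3: "eval oo e p = cls (subst \<sigma> p)" unfolding 1 using eval_cls[OF assms(1) 2] .
  have "subst \<sigma> p \<in> terms_over ar X"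
    using 2 assms(1) by (auto simp: terms_over_def vars_subst intro!: wf_subst)
  then show ?thesis unfolding 3 by (rule cls_in)
qed

lemma cv_cls: "u \<in> terms_over ar X \<Longrightarrow> cv (cls u) = vars u"
proof -
  assume u: "u \<in> terms_over ar X"
  have "(SOME w. w \<in> cls u) \<in> cls u" using in_cls[OF u] by (rule someI)
  then have "(u, SOME w. w \<in> cls u) \<in> R" by (simp only: Image_singleton_iff)
  then have "eqc ar \<Sigma> u (SOME w. w \<in> cls u)" unfolding free_rel_def by (simp only: mem_Collect_eq case_prod_conv)
  then show ?thesis unfolding cv_def using evars by simp
qed


lemma cv_ops: assumes "length cs = ar f" "set cs \<subseteq> AA"
  shows "oo f cs \<in> AA" "cv (oo f cs) = \<Union> (cv ` set cs)"
proof -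
  let ?us = "map (\<lambda>c. SOME u. u \<in> c) cs"
  have us: "set ?us \<subseteq> terms_over ar X" using A_cls assms(2) by auto
  have app: "App f ?us \<in> terms_over ar X" using us assms(1) by (intro app_terms) auto
  have eq: "oo f cs = cls (App f ?us)" unfolding free_op_def ..
  show "oo f cs \<in> AA" using eq app cls_in by simp
  show "cv (oo f cs) = \<Union> (cv ` set cs)" using eq cv_cls[OF app] by (auto simp: cv_def)
qed

lemma cv_eval: "wf ar p \<Longrightarrow> (\<forall>i. e i \<in> AA) \<Longrightarrow> cv (eval oo e p) = (\<Union>i\<in>vars p. cv (e i))"
proof (induction p)
  case (Var x)
  then show ?case by simp
next
  case (App f ts)
  have "set (map (eval oo e) ts) \<subseteq> AA" using App.prems eval_A by auto
  then have "cv (eval oo e (App f ts)) = \<Union> (cv ` set (map (eval oo e) ts))"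
    using cv_ops(2)[of "map (eval oo e) ts" f] App.prems by simp
  also have "\<dots> = (\<Union>i\<in>vars (App f ts). cv (e i))" using App by auto
  finally show ?case .
qed

definition SV where "SV = {(c, d). c \<in> AA \<and> d \<in> AA \<and> cv c = cv d}"

lemma S_cong_SV: "S_cong ar AA oo SV"
  unfolding S_cong_def is_cong_def
proof (intro conjI allI impI)
  show "equiv AA SV"
    by (rule equivI) (auto simp: SV_def refl_on_def sym_def trans_def)
next
  fix f xs ys
  assume h: "length xs = ar f \<and> length ys = ar f \<and> set xs \<subseteq> AA \<and> set ys \<subseteq> AA \<and>
       list_all2 (\<lambda>x y. (x, y) \<in> SV) xs ys"
  have "list_all2 (\<lambda>x y. cv x = cv y) xs ys"
    using h by (auto elim: list_all2_mono simp: SV_def)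
  then have "map cv xs = map cv ys" by (rule list_all2_map_eq)
  then have "cv ` set xs = cv ` set ys" by (metis list.set_map)
  then show "(oo f xs, oo f ys) \<in> SV" using h cv_ops unfolding SV_def by auto
next
  fix u v :: "('f, nat) trm" and \<rho> :: "nat \<Rightarrow> _"
  assume h: "wf ar u \<and> wf ar v \<and> vars u = vars v" "\<forall>i. \<rho> i \<in> AA"
  have "cv (eval oo \<rho> u) = cv (eval oo \<rho> v)" using cv_eval[of u \<rho>] cv_eval[of v \<rho>] h by simp
  then show "(eval oo \<rho> u, eval oo \<rho> v) \<in> SV"
    unfolding SV_def using eval_A h by auto
qed

lemma replica_sub: "(a, b) \<in> replica ar AA oo \<Longrightarrow> a \<in> AA \<and> b \<in> AA \<and> cv a = cv b"
  using S_cong_SV unfolding replica_def SV_def by auto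

lemma theta_eval: assumes "is_cong ar AA oo \<theta>"
  shows "wf ar p \<Longrightarrow> (\<forall>i. (e1 i, e2 i) \<in> \<theta>) \<Longrightarrow> (eval oo e1 p, eval oo e2 p) \<in> \<theta>"
proof (induction p)
  case (Var x)
  then show ?case by simp
next
  case (App f ts)
  have sub: "\<theta> \<subseteq> AA \<times> AA" using assms unfolding is_cong_def equiv_def refl_on_def by auto
  then have e: "\<forall>i. e1 i \<in> AA" "\<forall>i. e2 i \<in> AA" using App.prems by auto
  have "list_all2 (\<lambda>x y. (x, y) \<in> \<theta>) (map (eval oo e1) ts) (map (eval oo e2) ts)"
    using App by (auto simp: list_all2_conv_all_nth)
  moreover have "set (map (eval oo e1) ts) \<subseteq> AA" "set (map (eval oo e2) ts) \<subseteq> AA"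
    using e App.prems by (auto intro!: eval_A)
  ultimately show ?case using assms App.prems unfolding is_cong_def by simp
qed

end

lemma ident:
  fixes u w :: "('f, 'x) trm"
  assumes pl: "plural ar" and t: "t \<in> Tm ar 2" and wu: "wf ar u" and ww: "wf ar w"
    and vw: "vars u = vars w"
  shows "eqc ar (prolong ar (Id_of ar (Tt_ids t))) (subst (\<lambda>i. if i = 1 then u else w) t) u"
proof -
  define V where "V = vars u"
  define m where "m = card V"
  have fin: "finite V" unfolding V_def by (rule finite_vars)
  have ne: "V \<noteq> {}" unfolding V_def using vars_ne[OF pl wu] .
  have m1: "1 \<le> m" using fin ne unfolding m_def by (simp add: Suc_le_eq card_gt_0_iff)
  obtain h where h: "bij_betw h {1..m} V" using ex_bij_betw_nat_finite_1[OF fin] m_def by auto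
  define g where "g = inv_into {1..m} h"
  have g: "bij_betw g V {1..m}" unfolding g_def using h by (rule bij_betw_inv_into)
  have hg: "\<forall>x\<in>V. h (g x) = x" unfolding g_def using h by (simp add: bij_betw_inv_into_right)
  define \<sigma> where "\<sigma> i = (if i = (1::nat) then subst (Var \<circ> g) u else subst (Var \<circ> g) w)" for i
  have gV: "g ` V = {1..m}" using g by (simp add: bij_betw_def)
  have sT: "\<sigma> i \<in> Tm ar m" for i
    unfolding \<sigma>_def Tm_def using wu ww vw gV
    by (auto simp: vars_subst V_def intro!: wf_subst)
  have wt: "wf ar t" using t unfolding Tm_def by simp
  have "eqc ar (Tt_ids t) (subst Var t) (subst Var (Var (1::nat)))"
    by (rule eqc.ax) (auto simp: Tt_ids_def)
  then have "(t, Var 1) \<in> Id_of ar (Tt_ids t)" unfolding Id_of_def using wt by (simp add: subst_Var)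
  then have "(subst \<sigma> t, subst \<sigma> (Var 1)) \<in> prolong ar (Id_of ar (Tt_ids t))"
    unfolding prolong_def using m1 sT by blast
  then have "eqc ar (prolong ar (Id_of ar (Tt_ids t))) (subst (Var \<circ> h) (subst \<sigma> t)) (subst (Var \<circ> h) (subst \<sigma> (Var 1)))"
    by (rule eqc.ax) auto
  moreover have bk: "subst (Var \<circ> h) (subst (Var \<circ> g) z) = z" if "vars z = V" for z :: "('f, 'x) trm"
  proof -
    have "subst (Var \<circ> h) (subst (Var \<circ> g) z) = subst (\<lambda>x. Var (h (g x))) z" by (simp add: subst_subst)
    also have "\<dots> = subst Var z" using hg that by (intro subst_cong') auto
    finally show ?thesis by (simp add: subst_Var)
  qed
  moreover have "(\<lambda>i. subst (Var \<circ> h) (\<sigma> i)) = (\<lambda>i. if i = 1 then u else w)"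
    using bk[of u] bk[of w] vw unfolding \<sigma>_def V_def by auto
  ultimately show ?thesis unfolding \<sigma>_def using bk[of u] V_def by (simp add: subst_subst)
qed


context fa
begin

lemma binop_cls: assumes "wf ar t" "vars t = {1,2}" "u \<in> terms_over ar X" "w \<in> terms_over ar X"
  shows "binop t oo (cls u) (cls w) = cls (subst (\<lambda>i. if i = 1 then u else w) t)"
    "subst (\<lambda>i. if i = 1 then u else w) t \<in> terms_over ar X"
    "vars (subst (\<lambda>i. if i = 1 then u else w) t) = vars u \<union> vars w"
proof -
  have e: "(\<lambda>i. if i = 1 then cls u else cls w) = (\<lambda>i. cls (if i = (1::nat) then u else w))" by (rule ext) simp
  have st: "\<forall>i. (if i = (1::nat) then u else w) \<in> terms_over ar X" using assms by auto
  show "binop t oo (cls u) (cls w) = cls (subst (\<lambda>i. if i = 1 then u else w) t)"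
    unfolding binop_def e using eval_cls[OF assms(1) st] .
  show "vars (subst (\<lambda>i. if i = 1 then u else w) t) = vars u \<union> vars w"
    using assms(2) by (simp add: vars_subst)
  then show "subst (\<lambda>i. if i = 1 then u else w) t \<in> terms_over ar X"
    using assms st by (auto simp: terms_over_def intro!: wf_subst)
qed

end

theorem lemma4p1:
  fixes ar :: "'f \<Rightarrow> nat" and t :: "('f, nat) trm" and X :: "'x set"
    and \<theta> :: "('f, 'x) trm set rel"
  defines "\<Sigma> \<equiv> prolong ar (Id_of ar (Tt_ids t))"
  defines "A \<equiv> free_carrier ar \<Sigma> X"
  defines "ops \<equiv> free_op ar \<Sigma> X"
  defines "\<rho> \<equiv> replica ar A ops"
  assumes "plural ar"
    and "t \<in> Tm ar 2"
    and "is_cong ar A ops \<theta>"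
    and "r \<in> A // \<rho>" and "s \<in> A // \<rho>"
    and "a' \<in> r" and "b' \<in> s" and "(a', b') \<in> \<theta>"
  shows "\<forall>a \<in> r. \<forall>b \<in> s. (b, binop t ops b a) \<in> \<theta>"
proof -
  note pl = assms(5)
  interpret fa ar \<Sigma> X
  proof
    fix u v :: "('f, 'x) trm"
    assume "eqc ar \<Sigma> u v"
    then show "vars u = vars v" unfolding \<Sigma>_def by (rule eqc_vars[OF pl])
  qed
  have wt: "wf ar t" using assms(6) unfolding Tm_def by simp
  have vt: "vars t = {1, 2}"
  proof -
    have "vars t = {1..2}" using assms(6) unfolding Tm_def by simp
    moreover have "{1..2::nat} = {1, 2}" by auto
    ultimately show ?thesis by simp
  qed
  have cg: "is_cong ar AA oo \<theta>" using assms(7) unfolding A_def ops_def .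
  have eq: "equiv AA \<theta>" using cg unfolding is_cong_def by simp
  have sub: "\<theta> \<subseteq> AA \<times> AA" using eq unfolding equiv_def refl_on_def by auto
  have rfl: "x \<in> AA \<Longrightarrow> (x, x) \<in> \<theta>" for x using eq unfolding equiv_def refl_on_def by auto
  have sy: "(x, y) \<in> \<theta> \<Longrightarrow> (y, x) \<in> \<theta>" for x y using eq unfolding equiv_def sym_def by auto
  have tr: "(x, y) \<in> \<theta> \<Longrightarrow> (y, z) \<in> \<theta> \<Longrightarrow> (x, z) \<in> \<theta>" for x y z
    using eq unfolding equiv_def trans_def by blast
  let ?B = "binop t oo"
  have comp: "(x, x') \<in> \<theta> \<Longrightarrow> (y, y') \<in> \<theta> \<Longrightarrow> (?B x y, ?B x' y') \<in> \<theta>" for x x' y y'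
    unfolding binop_def by (rule theta_eval[OF cg wt]) auto
  have cls_fact: "x \<in> AA \<Longrightarrow> \<exists>u. u \<in> terms_over ar X \<and> x = cls u \<and> cv x = vars u" for x
    using A_cls by (auto simp: cv_def)
  have idem: "?B (cls u) (cls w) = cls u"
    if u: "u \<in> terms_over ar X" and w: "w \<in> terms_over ar X" and vw: "vars u = vars w" for u w
  proof -
    have "eqc ar \<Sigma> (subst (\<lambda>i. if i = 1 then u else w) t) u"
      unfolding \<Sigma>_def using u w vw by (intro ident[OF pl assms(6)]) (auto simp: terms_over_def)
    then have "cls (subst (\<lambda>i. if i = 1 then u else w) t) = cls u"
      using binop_cls(2)[OF wt vt u w] u by (intro cls_eq)
    then show ?thesis using binop_cls(1)[OF wt vt u w] by simp
  qed
  have cls_r: "x \<in> r \<Longrightarrow> y \<in> r \<Longrightarrow> x \<in> AA \<and> y \<in> AA \<and> cv x = cv y" if rq: "r \<in> A // \<rho>" for r x y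
  proof -
    assume "x \<in> r" "y \<in> r"
    obtain c where "r = \<rho> `` {c}" by (rule quotientE[OF rq]) blast
    then have "(c, x) \<in> replica ar AA oo" "(c, y) \<in> replica ar AA oo"
      using \<open>x \<in> r\<close> \<open>y \<in> r\<close> unfolding \<rho>_def A_def ops_def by auto
    then show ?thesis using replica_sub by metis
  qed
  show ?thesis
  proof (intro ballI)
    fix a b assume ar: "a \<in> r" and bs: "b \<in> s"
    obtain \<alpha> \<alpha>' where al: "\<alpha> \<in> terms_over ar X" "a = cls \<alpha>" "\<alpha>' \<in> terms_over ar X" "a' = cls \<alpha>'"
      "vars \<alpha> = vars \<alpha>'"
      using cls_r[OF assms(8) ar assms(10)] cls_fact by metis
    obtain \<beta> \<beta>' where be: "\<beta> \<in> terms_over ar X" "b = cls \<beta>" "\<beta>' \<in> terms_over ar X" "b' = cls \<beta>'"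
      "vars \<beta> = vars \<beta>'"
      using cls_r[OF assms(9) bs assms(11)] cls_fact by metis
    have aA: "a \<in> AA" "b \<in> AA" using al be cls_in by auto
    have e2: "(a, ?B a b') \<in> \<theta>"
      using comp[OF rfl[OF aA(1)] assms(12)] idem[OF al(1,3,5)] al by simp
    have e3: "(b, ?B b a') \<in> \<theta>"
      using comp[OF rfl[OF aA(2)] sy[OF assms(12)]] idem[OF be(1,3,5)] be by simp
    have e4: "(?B b a, ?B b (?B a b')) \<in> \<theta>" using comp[OF rfl[OF aA(2)] e2] .
    have ab'A: "?B a b' \<in> AA" using sub e2 by auto
    have e5: "(?B b (?B a b'), ?B (?B b a') (?B a b')) \<in> \<theta>" using comp[OF e3 rfl[OF ab'A]] .
    have e6: "?B (?B b a') (?B a b') = ?B b a'"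
      using binop_cls[OF wt vt be(1) al(3)] binop_cls[OF wt vt al(1) be(3)] al be
      by (simp add: idem Un_commute)
    have "(?B b a, ?B b a') \<in> \<theta>" using tr[OF e4 e5] e6 by simp
    then have "(?B b a, b) \<in> \<theta>" using tr sy[OF e3] by blast
    then show "(b, binop t ops b a) \<in> \<theta>" using sy unfolding ops_def by blast
  qed
qed

end
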